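(* Let $d\ge1$, $\alpha\in(0,2)$, and let $D\subset\mathbb{R}^d$ be a Borel set. For every $\gamma\in[0,\alpha)$ there exists a constant $C_2=C_2(d,\alpha,\gamma)>0$ such that for all $(t,x,y,z)\in(0,\infty)\times D\times D\times D$, $$\int_0^t\frac{\psi_\gamma(t-s,x,z)q(t-s,x,z)\psi_\gamma(s,z,y)q(s,z,y)}{\psi_\gamma(t,x,y)q(t,x,y)}\,ds\le C_2\int_0^t\Big(1\wedge\frac{\delta_D(z)}{s^{1/\alpha}}\Big)^\gamma\big(q(s,x,z)+q(s,z,y)\big)\,ds.$$
   Context: $\delta_D(x)$ is the Euclidean distance from $x$ to $D^c$; $q(t,x,y):=t^{-d/\alpha}\wedge\frac{t}{|x-y|^{d+\alpha}}$; $\psi_\gamma(t,x,y):=\big(1\wedge\frac{\delta_D(x)}{t^{1/\alpha}}\big)^\gamma\big(1\wedge\frac{\delta_D(y)}{t^{1/\alpha}}\big)^\gamma$. *)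

theory Defs
  imports "HOL-Analysis.Analysis"
begin

text \<open>Real power with the mathematical convention 0^0 = 1 (Isabelle's powr has 0 powr 0 = 0).\<close>
definition rpow :: "real \<Rightarrow> real \<Rightarrow> real" where
  "rpow a g = (if a = 0 then (if g = 0 then 1 else 0) else a powr g)"

text \<open>The factor 1 \<and> delta_D(x)/t^(1/alpha); if D^c is empty, delta_D = +infinity and the factor is 1.\<close>
definition bfac :: "real \<Rightarrow> 'a::euclidean_space set \<Rightarrow> real \<Rightarrow> 'a \<Rightarrow> real" where
  "bfac \<alpha> D t x = (if - D = {} then 1 else min 1 (infdist x (- D) / t powr (1 / \<alpha>)))"

text \<open>q(t,x,y) = t^(-d/alpha) \<and> t/|x-y|^(d+alpha), with d = DIM('a); for x = y the second term is +infinity.\<close>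
definition qk :: "real \<Rightarrow> real \<Rightarrow> 'a::euclidean_space \<Rightarrow> 'a \<Rightarrow> real" where
  "qk \<alpha> t x y = (if x = y then t powr (- real DIM('a) / \<alpha>)
     else min (t powr (- real DIM('a) / \<alpha>)) (t / norm (x - y) powr (real DIM('a) + \<alpha>)))"

definition psi :: "real \<Rightarrow> 'a::euclidean_space set \<Rightarrow> real \<Rightarrow> real \<Rightarrow> 'a \<Rightarrow> 'a \<Rightarrow> real" where
  "psi \<alpha> D \<gamma> t x y = rpow (bfac \<alpha> D t x) \<gamma> * rpow (bfac \<alpha> D t y) \<gamma>"

end

theory Submission
  imports Defs
begin


lemma rpow_alt: "rpow a g = (if g = 0 then 1 else a powr g)"
  unfolding rpow_def by auto

lemma rpow_nonneg: "0 \<le> rpow a g"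
  by (simp add: rpow_alt)

lemma rpow_mono: "0 \<le> a \<Longrightarrow> a \<le> b \<Longrightarrow> 0 \<le> g \<Longrightarrow> rpow a g \<le> rpow b g"
  by (simp add: rpow_alt powr_mono2)

lemma rpow_mult: "0 \<le> a \<Longrightarrow> 0 \<le> b \<Longrightarrow> rpow (a*b) g = rpow a g * rpow b g"
  by (simp add: rpow_alt powr_mult)

lemma rpow_pos: "0 < a \<Longrightarrow> rpow a g = a powr g"
  by (simp add: rpow_alt)

lemma rpow_le1: "0 \<le> a \<Longrightarrow> a \<le> 1 \<Longrightarrow> 0 \<le> g \<Longrightarrow> rpow a g \<le> 1"
  using powr_mono2[of g a 1] by (simp add: rpow_alt)

lemma bfac_nonneg: "0 \<le> bfac \<alpha> D s w"
  unfolding bfac_def by (auto simp: infdist_nonneg)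

lemma bfac_le1: "bfac \<alpha> D s w \<le> 1"
  unfolding bfac_def by auto

lemma bfac_anti: assumes "0 < \<alpha>" "0 < s" "s \<le> s'" shows "bfac \<alpha> D s' w \<le> bfac \<alpha> D s w"
proof -
  have "s powr (1/\<alpha>) \<le> s' powr (1/\<alpha>)" using assms by (intro powr_mono2) auto
  moreover have "0 < s powr (1/\<alpha>)" "0 < s' powr (1/\<alpha>)" using assms by auto
  ultimately have "infdist w (-D) / s' powr (1/\<alpha>) \<le> infdist w (-D) / s powr (1/\<alpha>)"
    by (intro divide_left_mono) (auto simp: infdist_nonneg)
  then show ?thesis unfolding bfac_def by auto
qed

lemma bfac_scale: assumes "0 < \<alpha>" "0 < s" "s \<le> s'"
  shows "bfac \<alpha> D s w \<le> (s'/s) powr (1/\<alpha>) * bfac \<alpha> D s' w"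
proof -
  have k1: "1 \<le> (s'/s) powr (1/\<alpha>)" using assms by (intro ge_one_powr_ge_zero) auto
  have sp: "0 < s' powr (1/\<alpha>)" "0 < s powr (1/\<alpha>)" using assms by auto
  have eq: "(s'/s) powr (1/\<alpha>) * (infdist w (-D) / s' powr (1/\<alpha>)) = infdist w (-D) / s powr (1/\<alpha>)"
    using assms sp by (simp add: powr_divide field_simps)
  show ?thesis
  proof (cases "-D = {}")
    case True then show ?thesis using k1 by (simp add: bfac_def)
  next
    case False
    have "min 1 (infdist w (-D) / s powr (1/\<alpha>)) \<le> (s'/s) powr (1/\<alpha>) * min 1 (infdist w (-D) / s' powr (1/\<alpha>))"
      using k1 eq by (simp add: min_mult_distrib_left min_def)
    then show ?thesis using False by (simp add: bfac_def)
  qed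
qed

lemma min1_lip: "(a::real) \<le> b + c \<Longrightarrow> 0 \<le> c \<Longrightarrow> min 1 a \<le> min 1 b + c"
  by (simp add: min_def)

lemma bfac_lip: assumes "0 < \<alpha>" "0 < s"
  shows "bfac \<alpha> D s w \<le> bfac \<alpha> D s w' + norm (w - w') / s powr (1/\<alpha>)"
proof (cases "-D = {}")
  case True then show ?thesis using assms by (simp add: bfac_def)
next
  case False
  have sp: "0 < s powr (1/\<alpha>)" using assms by auto
  have "infdist w (-D) \<le> infdist w' (-D) + norm (w - w')"
    using infdist_triangle[of w "-D" w'] by (simp add: dist_norm)
  then have "infdist w (-D) / s powr (1/\<alpha>) \<le> infdist w' (-D) / s powr (1/\<alpha>) + norm (w - w') / s powr (1/\<alpha>)"
    using sp by (simp add: divide_right_mono add_divide_distrib[symmetric])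
  moreover have "0 \<le> norm (w - w') / s powr (1/\<alpha>)" using sp by auto
  ultimately show ?thesis using False unfolding bfac_def by (simp add: min1_lip)
qed

lemma meas_bfac: "(\<lambda>s. bfac \<alpha> D s w) \<in> borel_measurable borel"
  unfolding bfac_def by measurable

lemma meas_rpow: "f \<in> borel_measurable borel \<Longrightarrow> (\<lambda>s. rpow (f s) g) \<in> borel_measurable borel"
  by (cases "g = 0") (simp_all add: rpow_alt)

lemma meas_qk: "(\<lambda>s. qk \<alpha> s x y) \<in> borel_measurable borel"
  unfolding qk_def by measurable




lemma gA_anti: "0 < \<alpha> \<Longrightarrow> 0 < s \<Longrightarrow> s \<le> s' \<Longrightarrow> 0 \<le> \<gamma> \<Longrightarrow>
   rpow (bfac \<alpha> D s' w) \<gamma> \<le> rpow (bfac \<alpha> D s w) \<gamma>"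
  by (intro rpow_mono bfac_nonneg bfac_anti) auto

lemma gA_le1: "0 \<le> \<gamma> \<Longrightarrow> rpow (bfac \<alpha> D s w) \<gamma> \<le> 1"
  by (intro rpow_le1 bfac_nonneg bfac_le1)

lemma gA_scale: assumes "0 < \<alpha>" "0 < s" "s \<le> s'" "0 \<le> \<gamma>"
  shows "rpow (bfac \<alpha> D s w) \<gamma> \<le> (s'/s) powr (\<gamma>/\<alpha>) * rpow (bfac \<alpha> D s' w) \<gamma>"
proof -
  have p: "0 < (s'/s) powr (1/\<alpha>)" using assms by auto
  have "rpow (bfac \<alpha> D s w) \<gamma> \<le> rpow ((s'/s) powr (1/\<alpha>) * bfac \<alpha> D s' w) \<gamma>"
    by (intro rpow_mono bfac_nonneg bfac_scale assms)
  also have "\<dots> = rpow ((s'/s) powr (1/\<alpha>)) \<gamma> * rpow (bfac \<alpha> D s' w) \<gamma>"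
    using p by (intro rpow_mult bfac_nonneg) auto
  also have "rpow ((s'/s) powr (1/\<alpha>)) \<gamma> = (s'/s) powr (\<gamma>/\<alpha>)"
    using p by (simp add: rpow_pos powr_powr)
  finally show ?thesis .
qed

lemma qk_pos: "0 < t \<Longrightarrow> 0 < qk \<alpha> t x y"
  unfolding qk_def by auto

lemma qk_le1: "qk \<alpha> t x y \<le> t powr (- real DIM('a) / \<alpha>)" for x y :: "'a::euclidean_space"
  unfolding qk_def by auto

lemma qk_le2: "x \<noteq> y \<Longrightarrow> qk \<alpha> t x y \<le> t / norm (x - y) powr (real DIM('a) + \<alpha>)" for x y :: "'a::euclidean_space"
  unfolding qk_def by auto

lemma qk_ge: "c \<le> t powr (- real DIM('a) / \<alpha>) \<Longrightarrow> (x \<noteq> y \<Longrightarrow> c \<le> t / norm (x - y) powr (real DIM('a) + \<alpha>))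
   \<Longrightarrow> c \<le> qk \<alpha> t x y" for x y :: "'a::euclidean_space"
  unfolding qk_def by auto

lemma qk_sym: "qk \<alpha> t x y = qk \<alpha> t y x"
  unfolding qk_def by (auto simp: norm_minus_commute)

lemma tpow_id: fixes \<alpha> t r n :: real assumes "0 < \<alpha>" "0 < t"
  shows "t powr (- n / \<alpha>) = t / t powr ((n + \<alpha>) / \<alpha>)"
proof -
  have "\<alpha> \<noteq> 0" using assms by auto
  then have "(n + \<alpha>) / \<alpha> = 1 + n / \<alpha>" by (simp add: field_simps)
  then have e2: "t powr ((n + \<alpha>)/\<alpha>) = t * t powr (n/\<alpha>)" using assms by (simp only: powr_add) simp
  then show ?thesis using assms by (simp add: powr_minus field_simps)
qed

lemma rpow_beta: fixes \<alpha> t r n :: real assumes "0 < \<alpha>" "0 \<le> r" shows "r powr (n + \<alpha>) = (r powr \<alpha>) powr ((n + \<alpha>) / \<alpha>)"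
proof -
  have "\<alpha> \<noteq> 0" using assms by auto
  then have "\<alpha> * ((n + \<alpha>) / \<alpha>) = n + \<alpha>" by simp
  then show ?thesis by (simp add: powr_powr)
qed

lemma crit1: fixes \<alpha> t r n :: real assumes "0 < \<alpha>" "0 < t" "0 < r" "0 \<le> n" "r powr \<alpha> \<le> t"
  shows "t powr (- n / \<alpha>) \<le> t / r powr (n + \<alpha>)"
proof -
  have "r powr (n + \<alpha>) = (r powr \<alpha>) powr ((n + \<alpha>) / \<alpha>)"
    using rpow_beta[of \<alpha> r n] assms by auto
  also have "\<dots> \<le> t powr ((n + \<alpha>) / \<alpha>)"
    using assms by (intro powr_mono2) auto
  finally have "r powr (n + \<alpha>) \<le> t powr ((n + \<alpha>) / \<alpha>)" .
  moreover have "0 < r powr (n + \<alpha>)" using assms by auto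
  ultimately show ?thesis unfolding tpow_id[OF assms(1,2)] using assms
    by (intro divide_left_mono) auto
qed

lemma crit2: fixes \<alpha> t r n :: real assumes "0 < \<alpha>" "0 < t" "0 < r" "0 \<le> n" "t \<le> r powr \<alpha>"
  shows "t / r powr (n + \<alpha>) \<le> t powr (- n / \<alpha>)"
proof -
  have "t powr ((n + \<alpha>) / \<alpha>) \<le> (r powr \<alpha>) powr ((n + \<alpha>) / \<alpha>)"
    using assms by (intro powr_mono2) auto
  also have "\<dots> = r powr (n + \<alpha>)"
    using rpow_beta[of \<alpha> r n] assms by auto
  finally have "t powr ((n + \<alpha>) / \<alpha>) \<le> r powr (n + \<alpha>)" .
  moreover have "0 < t powr ((n + \<alpha>) / \<alpha>)" using assms by auto
  ultimately show ?thesis unfolding tpow_id[OF assms(1,2)] using assms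
    by (intro divide_left_mono) auto
qed

lemma qk_small: fixes x y :: "'a::euclidean_space" assumes "0 < \<alpha>" "0 < s" "x \<noteq> y" "s \<le> norm (x - y) powr \<alpha>"
  shows "qk \<alpha> s x y = s / norm (x - y) powr (real DIM('a) + \<alpha>)"
proof -
  have "s / norm (x - y) powr (real DIM('a) + \<alpha>) \<le> s powr (- real DIM('a) / \<alpha>)"
    using crit2[of \<alpha> s "norm (x - y)" "real DIM('a)"] assms by auto
  then show ?thesis using assms unfolding qk_def by (simp add: min_def)
qed




lemma half_pow: fixes r b :: real assumes "0 \<le> r" shows "(r/2) powr b = r powr b / 2 powr b"
  using assms by (simp add: powr_divide)

lemma qpath: fixes x y z :: "'a::euclidean_space"
  assumes a: "0 < \<alpha>" and s: "0 < s" "s \<le> t/2"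
  shows "qk \<alpha> (t-s) x z \<le> 2 powr (real DIM('a)/\<alpha>) * 2 powr (real DIM('a)+\<alpha>) * qk \<alpha> t x y
       \<or> qk \<alpha> s z y \<le> 2 powr (real DIM('a)+\<alpha>) * (s/t) * qk \<alpha> t x y"
proof -
  let ?n = "real DIM('a)"
  define K1 where "K1 = 2 powr (?n/\<alpha>) * 2 powr (?n+\<alpha>)"
  have t: "0 < t" using s by auto
  have u: "t/2 \<le> t - s" "0 < t - s" "t - s \<le> t" using s by auto
  have Kb: "1 \<le> (2::real) powr (?n+\<alpha>)" using a by (intro ge_one_powr_ge_zero) auto
  have Ke: "0 < (2::real) powr (?n/\<alpha>)" by auto
  have Ke1: "1 \<le> (2::real) powr (?n/\<alpha>)" using a by (intro ge_one_powr_ge_zero) auto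
  have qu1: "qk \<alpha> (t-s) x z \<le> 2 powr (?n/\<alpha>) * t powr (-?n/\<alpha>)"
  proof -
    have "qk \<alpha> (t-s) x z \<le> (t-s) powr (-?n/\<alpha>)" by (rule qk_le1)
    also have "\<dots> \<le> (t/2) powr (-?n/\<alpha>)" using u t a by (intro powr_mono2') auto
    also have "\<dots> = 2 powr (?n/\<alpha>) * t powr (-?n/\<alpha>)"
      using t by (simp add: powr_divide powr_minus divide_simps)
    finally show ?thesis .
  qed
  have K1e: "2 powr (?n/\<alpha>) \<le> K1" "2 powr (?n+\<alpha>) \<le> K1" "0 < K1"
    unfolding K1_def using Kb Ke Ke1 by (auto simp: mult_le_cancel_left1 mult_le_cancel_right1)
  have qu1': "qk \<alpha> (t-s) x z \<le> K1 * t powr (-?n/\<alpha>)"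
    using qu1 mult_right_mono[OF K1e(1), of "t powr (-?n/\<alpha>)"] by simp
  show ?thesis
  proof (cases "x = y")
    case True
    then have "qk \<alpha> t x y = t powr (-?n/\<alpha>)" unfolding qk_def by simp
    then show ?thesis using qu1' unfolding K1_def by simp
  next
    case xy: False
    define r where "r = norm (x - y)"
    have r: "0 < r" using xy unfolding r_def by auto
    have rb: "0 < r powr (?n+\<alpha>)" using r by auto
    show ?thesis
    proof (cases "r/2 \<le> norm (x - z)")
      case True
      then have xz: "x \<noteq> z" using r by auto
      have "qk \<alpha> (t-s) x z \<le> (t-s) / norm (x - z) powr (?n+\<alpha>)" using xz by (rule qk_le2)
      also have "\<dots> \<le> t / (r/2) powr (?n+\<alpha>)"
        using u r True a by (intro frac_le powr_mono2) auto
      also have "\<dots> = 2 powr (?n+\<alpha>) * (t / r powr (?n+\<alpha>))"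
        using r by (simp add: half_pow)
      finally have q2: "qk \<alpha> (t-s) x z \<le> 2 powr (?n+\<alpha>) * (t / r powr (?n+\<alpha>))" .
      have "qk \<alpha> (t-s) x z / K1 \<le> qk \<alpha> t x y"
      proof (rule qk_ge)
        show "qk \<alpha> (t-s) x z / K1 \<le> t powr (-?n/\<alpha>)"
          using qu1' K1e by (simp add: pos_divide_le_eq mult.commute)
        show "qk \<alpha> (t-s) x z / K1 \<le> t / norm (x - y) powr (?n+\<alpha>)"
          using q2 mult_right_mono[OF K1e(2), of "t / norm (x - y) powr (?n+\<alpha>)"] K1e(3) t
          unfolding r_def by (simp add: pos_divide_le_eq mult.commute)
      qed
      then have "qk \<alpha> (t-s) x z \<le> K1 * qk \<alpha> t x y"
        using K1e(3) by (simp add: pos_divide_le_eq mult.commute)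
      then show ?thesis unfolding K1_def by simp
    next
      case False
      have "r \<le> norm (x - z) + norm (z - y)" unfolding r_def
        using norm_triangle_ineq[of "x - z" "z - y"] by simp
      then have zy: "r/2 \<le> norm (z - y)" using False by auto
      then have zy': "z \<noteq> y" using r by auto
      show ?thesis
      proof (cases "r powr \<alpha> \<le> t")
        case True
        have "t powr (-?n/\<alpha>) \<le> qk \<alpha> t x y"
          using crit1[OF a t r _ True, of ?n] unfolding r_def by (intro qk_ge) auto
        then have "qk \<alpha> (t-s) x z \<le> K1 * qk \<alpha> t x y"
          using qu1' mult_left_mono[of _ _ K1] K1e(3) by (meson less_imp_le order_trans)
        then show ?thesis unfolding K1_def by simp
      next
        case False
        have qt: "t / r powr (?n+\<alpha>) \<le> qk \<alpha> t x y"
          using crit2[OF a t r _, of ?n] False unfolding r_def by (intro qk_ge) auto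
        have "qk \<alpha> s z y \<le> s / norm (z - y) powr (?n+\<alpha>)" using zy' by (rule qk_le2)
        also have "\<dots> \<le> s / (r/2) powr (?n+\<alpha>)"
          using s r zy a by (intro divide_left_mono powr_mono2 mult_pos_pos) auto
        also have "\<dots> = 2 powr (?n+\<alpha>) * (s/t) * (t / r powr (?n+\<alpha>))"
          using r t by (simp add: half_pow)
        also have "\<dots> \<le> 2 powr (?n+\<alpha>) * (s/t) * qk \<alpha> t x y"
          using qt s t by (intro mult_left_mono) auto
        finally show ?thesis by simp
      qed
    qed
  qed
qed




definition Mm :: "real \<Rightarrow> real \<Rightarrow> 'a::euclidean_space \<Rightarrow> 'a \<Rightarrow> real" where
  "Mm \<alpha> t z w = min (norm (z - w) powr \<alpha>) t"

lemma V_le: fixes M s \<gamma> :: real assumes "0 \<le> M" "0 < s" "0 \<le> \<gamma>" "0 < \<alpha>"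
  shows "(1 + (M/s) powr (1/\<alpha>)) powr \<gamma> \<le> 2 powr \<gamma> * (1 + (if s < M then (M/s) powr (\<gamma>/\<alpha>) else 0))"
proof (cases "s < M")
  case True
  have V1: "1 \<le> (M/s) powr (1/\<alpha>)" using True assms by (intro ge_one_powr_ge_zero) auto
  have "(1 + (M/s) powr (1/\<alpha>)) powr \<gamma> \<le> (2 * (M/s) powr (1/\<alpha>)) powr \<gamma>"
    using V1 assms by (intro powr_mono2) auto
  also have "\<dots> = 2 powr \<gamma> * (M/s) powr (\<gamma>/\<alpha>)"
    using assms by (simp add: powr_mult powr_powr)
  also have "\<dots> \<le> 2 powr \<gamma> * (1 + (if s < M then (M/s) powr (\<gamma>/\<alpha>) else 0))"
    using True by simp
  finally show ?thesis .
next
  case False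
  have V1: "(M/s) powr (1/\<alpha>) \<le> 1" using False assms by (intro powr_le1) auto
  have "(1 + (M/s) powr (1/\<alpha>)) powr \<gamma> \<le> 2 powr \<gamma>"
    using V1 assms by (intro powr_mono2) auto
  then show ?thesis using False by simp
qed

lemma wbound_real: fixes z y :: "'a::euclidean_space"
  assumes a: "0 < \<alpha>" and s: "0 < s" "s \<le> t/2"
  shows "bfac \<alpha> D (t-s) z * bfac \<alpha> D s y \<le> 2 powr (1/\<alpha>) * bfac \<alpha> D t y * (1 + (Mm \<alpha> t z y / s) powr (1/\<alpha>))"
proof -
  have t: "0 < t" using s by auto
  have u: "0 < t - s" "t - s \<le> t" using s by auto
  define Ay where "Ay = bfac \<alpha> D t y"
  define ts where "ts = (t/s) powr (1/\<alpha>)"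
  have Ay0: "0 \<le> Ay" unfolding Ay_def by (rule bfac_nonneg)
  have two: "1 \<le> (2::real) powr (1/\<alpha>)" using a by (intro ge_one_powr_ge_zero) auto
  have sc_y: "bfac \<alpha> D s y \<le> ts * Ay" unfolding ts_def Ay_def using a s by (intro bfac_scale) auto
  have sc_z: "bfac \<alpha> D (t-s) z \<le> 2 powr (1/\<alpha>) * bfac \<alpha> D t z"
  proof -
    have "bfac \<alpha> D (t-s) z \<le> (t/(t-s)) powr (1/\<alpha>) * bfac \<alpha> D t z"
      using a u by (intro bfac_scale) auto
    also have "\<dots> \<le> 2 powr (1/\<alpha>) * bfac \<alpha> D t z"
      using a u s by (intro mult_right_mono powr_mono2 bfac_nonneg) (auto simp: divide_simps)
    finally show ?thesis .
  qed
  have By: "0 \<le> bfac \<alpha> D s y" "bfac \<alpha> D s y \<le> 1" "0 \<le> bfac \<alpha> D (t-s) z" "bfac \<alpha> D (t-s) z \<le> 1"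
    by (auto intro: bfac_nonneg bfac_le1)
  have tsp: "0 < ts" unfolding ts_def using s t by auto
  show ?thesis
  proof (cases "norm (z - y) powr \<alpha> \<le> t")
    case True
    define \<rho> where "\<rho> = norm (z - y)"
    have \<rho>0: "0 \<le> \<rho>" unfolding \<rho>_def by auto
    have M: "Mm \<alpha> t z y = \<rho> powr \<alpha>" unfolding Mm_def \<rho>_def using True by simp
    have V: "(Mm \<alpha> t z y / s) powr (1/\<alpha>) = \<rho> / s powr (1/\<alpha>)"
      unfolding M using a \<rho>0 s by (simp add: powr_divide powr_powr)
    have lip: "bfac \<alpha> D t z \<le> Ay + \<rho> / t powr (1/\<alpha>)"
      unfolding Ay_def \<rho>_def using a t by (rule bfac_lip)
    have key: "\<rho> / t powr (1/\<alpha>) * ts = \<rho> / s powr (1/\<alpha>)"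
      unfolding ts_def using s t by (simp add: powr_divide)
    have "bfac \<alpha> D (t-s) z * bfac \<alpha> D s y \<le> (2 powr (1/\<alpha>) * (Ay + \<rho> / t powr (1/\<alpha>))) * bfac \<alpha> D s y"
      using sc_z lip two By by (intro mult_right_mono) (auto intro: order_trans)
    also have "\<dots> = 2 powr (1/\<alpha>) * (Ay * bfac \<alpha> D s y + \<rho> / t powr (1/\<alpha>) * bfac \<alpha> D s y)"
      by (simp add: algebra_simps)
    also have "\<dots> \<le> 2 powr (1/\<alpha>) * (Ay * 1 + \<rho> / t powr (1/\<alpha>) * (ts * Ay))"
      using By sc_y Ay0 \<rho>0 t by (intro mult_left_mono add_mono mult_left_mono) auto
    also have "\<dots> = 2 powr (1/\<alpha>) * Ay * (1 + \<rho> / t powr (1/\<alpha>) * ts)"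
      by (simp add: algebra_simps)
    also have "\<dots> = 2 powr (1/\<alpha>) * Ay * (1 + \<rho> / s powr (1/\<alpha>))"
      by (simp only: key)
    finally show ?thesis unfolding V Ay_def .
  next
    case False
    have M: "Mm \<alpha> t z y = t" unfolding Mm_def using False by simp
    have "bfac \<alpha> D (t-s) z * bfac \<alpha> D s y \<le> bfac \<alpha> D s y"
      using By by (simp add: mult_left_le_one_le)
    also have "\<dots> \<le> ts * Ay" by (rule sc_y)
    also have "\<dots> \<le> 2 powr (1/\<alpha>) * Ay * (1 + ts)"
    proof -
      have "ts * Ay \<le> 1 * ((1 + ts) * Ay)" using Ay0 tsp mult_right_mono[of ts "1+ts" Ay] by simp
      also have "\<dots> \<le> 2 powr (1/\<alpha>) * ((1 + ts) * Ay)"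
        using two Ay0 tsp by (intro mult_right_mono) auto
      finally show ?thesis by (simp add: algebra_simps)
    qed
    finally show ?thesis unfolding M ts_def Ay_def .
  qed
qed

lemma wbound: fixes z y :: "'a::euclidean_space"
  assumes a: "0 < \<alpha>" and g: "0 \<le> \<gamma>" and s: "0 < s" "s \<le> t/2"
  shows "rpow (bfac \<alpha> D (t-s) z) \<gamma> * rpow (bfac \<alpha> D s y) \<gamma>
     \<le> 2 powr (\<gamma>/\<alpha>) * 2 powr \<gamma> * rpow (bfac \<alpha> D t y) \<gamma> *
        (1 + (if s < Mm \<alpha> t z y then (Mm \<alpha> t z y / s) powr (\<gamma>/\<alpha>) else 0))"
proof -
  define V where "V = (Mm \<alpha> t z y / s) powr (1/\<alpha>)"
  have t: "0 < t" using s by auto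
  have M0: "0 \<le> Mm \<alpha> t z y" unfolding Mm_def using t by auto
  have V0: "0 \<le> V" unfolding V_def by auto
  have "rpow (bfac \<alpha> D (t-s) z) \<gamma> * rpow (bfac \<alpha> D s y) \<gamma> = rpow (bfac \<alpha> D (t-s) z * bfac \<alpha> D s y) \<gamma>"
    by (simp add: rpow_mult bfac_nonneg)
  also have "\<dots> \<le> rpow (2 powr (1/\<alpha>) * bfac \<alpha> D t y * (1 + V)) \<gamma>"
    unfolding V_def using wbound_real[OF a s] g by (intro rpow_mono mult_nonneg_nonneg bfac_nonneg) auto
  also have "\<dots> = rpow (2 powr (1/\<alpha>)) \<gamma> * rpow (bfac \<alpha> D t y) \<gamma> * rpow (1 + V) \<gamma>"
    using V0 by (simp add: rpow_mult bfac_nonneg)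
  also have "\<dots> = 2 powr (\<gamma>/\<alpha>) * rpow (bfac \<alpha> D t y) \<gamma> * (1 + V) powr \<gamma>"
    using V0 by (simp add: rpow_pos powr_powr)
  also have "\<dots> \<le> 2 powr (\<gamma>/\<alpha>) * rpow (bfac \<alpha> D t y) \<gamma> * (2 powr \<gamma> * (1 + (if s < Mm \<alpha> t z y then (Mm \<alpha> t z y / s) powr (\<gamma>/\<alpha>) else 0)))"
    unfolding V_def using V_le[OF M0 s(1) g a] by (intro mult_left_mono mult_nonneg_nonneg rpow_nonneg) auto
  finally show ?thesis by (simp add: algebra_simps)
qed




definition Gf :: "real \<Rightarrow> 'a::euclidean_space set \<Rightarrow> real \<Rightarrow> 'a \<Rightarrow> 'a \<Rightarrow> real \<Rightarrow> real" where
  "Gf \<alpha> D \<gamma> z w s = rpow (bfac \<alpha> D s z) \<gamma> * qk \<alpha> s z w"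

definition Hf :: "real \<Rightarrow> 'a::euclidean_space set \<Rightarrow> real \<Rightarrow> real \<Rightarrow> 'a \<Rightarrow> 'a \<Rightarrow> real \<Rightarrow> real" where
  "Hf \<alpha> D \<gamma> t z w s = (if s < Mm \<alpha> t z w then Gf \<alpha> D \<gamma> z w s * (Mm \<alpha> t z w / s) powr (\<gamma>/\<alpha>) else 0)"

definition Ff :: "real \<Rightarrow> 'a::euclidean_space set \<Rightarrow> real \<Rightarrow> real \<Rightarrow> 'a \<Rightarrow> 'a \<Rightarrow> 'a \<Rightarrow> real \<Rightarrow> real" where
  "Ff \<alpha> D \<gamma> t x y z s = psi \<alpha> D \<gamma> (t - s) x z * qk \<alpha> (t - s) x z * psi \<alpha> D \<gamma> s z y * qk \<alpha> s z y
      / (psi \<alpha> D \<gamma> t x y * qk \<alpha> t x y)"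

definition Kp :: "real \<Rightarrow> real \<Rightarrow> real \<Rightarrow> real" where
  "Kp n \<alpha> \<gamma> = 2 powr (n/\<alpha>) * 2 powr (n+\<alpha>) * 2 powr (\<gamma>/\<alpha>) * (2 powr (\<gamma>/\<alpha>) * 2 powr \<gamma>)
     + 2 powr (n+\<alpha>) * 2 powr (\<gamma>/\<alpha>)"

lemma Gf_nonneg: "0 < s \<Longrightarrow> 0 \<le> Gf \<alpha> D \<gamma> z w s"
  unfolding Gf_def using qk_pos[of s \<alpha> z w] by (intro mult_nonneg_nonneg rpow_nonneg) auto

lemma Hf_nonneg: "0 < s \<Longrightarrow> 0 \<le> Hf \<alpha> D \<gamma> t z w s"
  unfolding Hf_def by (simp add: Gf_nonneg)

lemma mono4: fixes p1 p2 p3 p4 q1 q2 q3 q4 :: real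
  assumes "0 \<le> p1" "0 \<le> p2" "0 \<le> p3" "0 \<le> p4" "p1 \<le> q1" "p2 \<le> q2" "p3 \<le> q3" "p4 \<le> q4"
  shows "p1 * p2 * p3 * p4 \<le> q1 * q2 * q3 * q4"
  using assms by (intro mult_mono) (auto intro: mult_nonneg_nonneg order_trans)

lemma pointwise: fixes x y z :: "'a::euclidean_space"
  assumes a: "0 < \<alpha>" and g: "0 \<le> \<gamma>" "\<gamma> \<le> \<alpha>" and s: "0 < s" "s \<le> t/2"
  shows "Ff \<alpha> D \<gamma> t x y z s \<le> Kp (real DIM('a)) \<alpha> \<gamma> *
           (Gf \<alpha> D \<gamma> z y s + Hf \<alpha> D \<gamma> t z y s + Gf \<alpha> D \<gamma> z x (t - s))"
proof -
  let ?n = "real DIM('a)"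
  define K1 where "K1 = 2 powr (?n/\<alpha>) * 2 powr (?n+\<alpha>)"
  define K2 where "K2 = (2::real) powr (?n+\<alpha>)"
  define c2 where "c2 = (2::real) powr (\<gamma>/\<alpha>) * 2 powr \<gamma>"
  have KpE: "Kp ?n \<alpha> \<gamma> = K1 * 2 powr (\<gamma>/\<alpha>) * c2 + K2 * 2 powr (\<gamma>/\<alpha>)"
    unfolding Kp_def K1_def K2_def c2_def by simp
  have t: "0 < t" using s by auto
  define u where "u = t - s"
  have u: "0 < u" "u \<le> t" "t/2 \<le> u" unfolding u_def using s by auto
  define a where "a = rpow (bfac \<alpha> D t x) \<gamma>"
  define b where "b = rpow (bfac \<alpha> D t y) \<gamma>"
  define qt where "qt = qk \<alpha> t x y"
  define G1 where "G1 = Gf \<alpha> D \<gamma> z y s"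
  define H1 where "H1 = Hf \<alpha> D \<gamma> t z y s"
  define G2 where "G2 = Gf \<alpha> D \<gamma> z x u"
  have G1: "0 \<le> G1" unfolding G1_def using s(1) by (rule Gf_nonneg)
  have H1: "0 \<le> H1" unfolding H1_def using s(1) by (rule Hf_nonneg)
  have G2: "0 \<le> G2" unfolding G2_def using u by (intro Gf_nonneg) auto
  have K1p: "0 < K1" "0 < K2" "0 < c2" unfolding K1_def K2_def c2_def by auto
  have Kp0: "0 \<le> Kp ?n \<alpha> \<gamma>" unfolding KpE using K1p by auto
  have qt: "0 < qt" unfolding qt_def using t by (rule qk_pos)
  have ab: "0 \<le> a" "0 \<le> b" unfolding a_def b_def by (auto intro: rpow_nonneg)
  show ?thesis
  proof (cases "a * b = 0")
    case True
    then have "Ff \<alpha> D \<gamma> t x y z s = 0" unfolding Ff_def psi_def a_def b_def by simp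
    then show ?thesis using Kp0 G1 H1 G2 unfolding G1_def H1_def G2_def u_def by simp
  next
    case False
    have ab': "0 < a" "0 < b" using False ab by (auto simp: less_le)
    define Den where "Den = a * b * qt"
    have Den: "0 < Den" unfolding Den_def using ab' qt by auto
    define ux where "ux = rpow (bfac \<alpha> D u x) \<gamma>"
    define uz where "uz = rpow (bfac \<alpha> D u z) \<gamma>"
    define sz where "sz = rpow (bfac \<alpha> D s z) \<gamma>"
    define sy where "sy = rpow (bfac \<alpha> D s y) \<gamma>"
    have nn: "0 \<le> ux" "0 \<le> uz" "0 \<le> sz" "0 \<le> sy" "sz \<le> 1"
      unfolding ux_def uz_def sz_def sy_def by (auto intro: rpow_nonneg gA_le1 g)
    have qu: "0 < qk \<alpha> u x z" "0 < qk \<alpha> s z y" using u s by (auto intro: qk_pos)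
    have FfE: "Ff \<alpha> D \<gamma> t x y z s = (ux * uz * qk \<alpha> u x z * sz * sy * qk \<alpha> s z y) / Den"
      unfolding Ff_def psi_def Den_def a_def b_def qt_def ux_def uz_def sz_def sy_def u_def
      by (simp add: algebra_simps)
    have uxb: "ux \<le> 2 powr (\<gamma>/\<alpha>) * a"
    proof -
      have "ux \<le> (t/u) powr (\<gamma>/\<alpha>) * a" unfolding ux_def a_def using a u g by (intro gA_scale) auto
      also have "\<dots> \<le> 2 powr (\<gamma>/\<alpha>) * a"
        using u a g ab by (intro mult_right_mono powr_mono2) (auto simp: divide_simps)
      finally show ?thesis .
    qed
    have syb: "sy \<le> (t/s) powr (\<gamma>/\<alpha>) * b" unfolding sy_def b_def using a s g by (intro gA_scale) auto
    have Num_le: "ux * uz * qk \<alpha> u x z * sz * sy * qk \<alpha> s z y \<le> Den * (Kp ?n \<alpha> \<gamma> * (G1 + H1 + G2))"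
      using qpath[OF a s, of x z y] unfolding u_def[symmetric]
    proof
      assume q1: "qk \<alpha> u x z \<le> 2 powr (?n/\<alpha>) * 2 powr (?n+\<alpha>) * qk \<alpha> t x y"
      have W: "uz * sy \<le> c2 * b * (1 + (if s < Mm \<alpha> t z y then (Mm \<alpha> t z y / s) powr (\<gamma>/\<alpha>) else 0))"
        using wbound[OF a g(1) s, of D z y] unfolding uz_def sy_def u_def c2_def b_def by simp
      have GH: "G1 * (1 + (if s < Mm \<alpha> t z y then (Mm \<alpha> t z y / s) powr (\<gamma>/\<alpha>) else 0)) = G1 + H1"
        unfolding G1_def H1_def Hf_def by (simp add: algebra_simps)
      have "ux * uz * qk \<alpha> u x z * sz * sy * qk \<alpha> s z y = ux * (uz * sy) * qk \<alpha> u x z * G1"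
        unfolding G1_def Gf_def sz_def by (simp add: algebra_simps)
      also have "\<dots> \<le> (2 powr (\<gamma>/\<alpha>) * a) * (c2 * b * (1 + (if s < Mm \<alpha> t z y then (Mm \<alpha> t z y / s) powr (\<gamma>/\<alpha>) else 0))) * (K1 * qt) * G1"
        using uxb W q1 nn qu G1 unfolding K1_def qt_def by (intro mono4) auto
      also have "\<dots> = Den * ((K1 * 2 powr (\<gamma>/\<alpha>) * c2) * (G1 + H1))"
        unfolding Den_def GH[symmetric] by (simp add: algebra_simps)
      also have "\<dots> \<le> Den * (Kp ?n \<alpha> \<gamma> * (G1 + H1 + G2))"
      proof -
        have "(K1 * 2 powr (\<gamma>/\<alpha>) * c2) * (G1 + H1) \<le> Kp ?n \<alpha> \<gamma> * (G1 + H1)"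
          unfolding KpE using K1p G1 H1 by (intro mult_right_mono) auto
        also have "\<dots> \<le> Kp ?n \<alpha> \<gamma> * (G1 + H1 + G2)"
          using Kp0 G2 by (intro mult_left_mono) auto
        finally show ?thesis using Den by simp
      qed
      finally show ?thesis .
    next
      assume q2: "qk \<alpha> s z y \<le> 2 powr (?n+\<alpha>) * (s/t) * qk \<alpha> t x y"
      have ts1: "(t/s) powr (\<gamma>/\<alpha>) * (s/t) \<le> 1"
      proof -
        have "(t/s) powr (\<gamma>/\<alpha>) \<le> (t/s) powr 1" using a g s by (intro powr_mono) auto
        then have "(t/s) powr (\<gamma>/\<alpha>) * (s/t) \<le> (t/s) * (s/t)" using s t by (intro mult_right_mono) auto
        then show ?thesis using s t by simp
      qed
      have G2E: "uz * qk \<alpha> u x z = G2" unfolding G2_def Gf_def uz_def by (simp add: qk_sym)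
      have "ux * uz * qk \<alpha> u x z * sz * sy * qk \<alpha> s z y = ux * sy * qk \<alpha> s z y * (sz * G2)"
        unfolding G2E[symmetric] by (simp add: algebra_simps)
      also have "\<dots> \<le> (2 powr (\<gamma>/\<alpha>) * a) * ((t/s) powr (\<gamma>/\<alpha>) * b) * (K2 * (s/t) * qt) * (1 * G2)"
        using uxb syb q2 nn qu G2 unfolding K2_def qt_def by (intro mono4 mult_right_mono) auto
      also have "\<dots> = Den * (K2 * 2 powr (\<gamma>/\<alpha>) * G2) * ((t/s) powr (\<gamma>/\<alpha>) * (s/t))"
        unfolding Den_def by (simp add: algebra_simps)
      also have "\<dots> \<le> Den * (K2 * 2 powr (\<gamma>/\<alpha>) * G2) * 1"
        using ts1 Den K1p G2 by (intro mult_left_mono) auto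
      also have "\<dots> \<le> Den * (Kp ?n \<alpha> \<gamma> * (G1 + H1 + G2))"
      proof -
        have "K2 * 2 powr (\<gamma>/\<alpha>) * G2 \<le> Kp ?n \<alpha> \<gamma> * G2"
          unfolding KpE using K1p G2 by (intro mult_right_mono) auto
        also have "\<dots> \<le> Kp ?n \<alpha> \<gamma> * (G1 + H1 + G2)"
          using Kp0 G1 H1 by (intro mult_left_mono) auto
        finally show ?thesis using Den by simp
      qed
      finally show ?thesis .
    qed
    show ?thesis unfolding FfE using Num_le Den
      unfolding G1_def H1_def G2_def u_def by (simp add: pos_divide_le_eq mult.commute)
  qed
qed




lemma hardy: fixes z w :: "'a::euclidean_space"
  assumes a: "0 < \<alpha>" and g: "0 \<le> \<gamma>" "\<gamma> < \<alpha>" and t: "0 < t"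
  shows "(\<integral>\<^sup>+ s\<in>{0<..<t}. ennreal (Hf \<alpha> D \<gamma> t z w s) \<partial>lborel)
     \<le> ennreal (4 / (2 - 2*\<gamma>/\<alpha>)) * (\<integral>\<^sup>+ s\<in>{0<..<t}. ennreal (Gf \<alpha> D \<gamma> z w s) \<partial>lborel)"
proof (cases "0 < Mm \<alpha> t z w")
  case False
  have "(\<integral>\<^sup>+ s\<in>{0<..<t}. ennreal (Hf \<alpha> D \<gamma> t z w s) \<partial>lborel) \<le> (\<integral>\<^sup>+ (s::real). 0 \<partial>lborel)"
    by (intro nn_integral_mono) (use False in \<open>auto simp: Hf_def indicator_def\<close>)
  then show ?thesis by simp
next
  case True
  let ?n = "real DIM('a)"
  define M where "M = Mm \<alpha> t z w"
  define \<rho> where "\<rho> = norm (z - w)"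
  have M0: "0 < M" using True unfolding M_def .
  have zw: "z \<noteq> w" using M0 t unfolding M_def Mm_def by auto
  have \<rho>0: "0 < \<rho>" unfolding \<rho>_def using zw by auto
  have M\<rho>: "M \<le> \<rho> powr \<alpha>" "M \<le> t" unfolding M_def Mm_def \<rho>_def by auto
  define gM where "gM = rpow (bfac \<alpha> D M z) \<gamma>"
  define B where "B = \<rho> powr (?n + \<alpha>)"
  have B0: "0 < B" unfolding B_def using \<rho>0 by auto
  have gM0: "0 \<le> gM" unfolding gM_def by (rule rpow_nonneg)
  define p where "p = 1 - 2*\<gamma>/\<alpha>"
  have p: "p > -1" "p + 1 = 2 - 2*\<gamma>/\<alpha>" unfolding p_def using a g by (auto simp: field_simps)
  define c0 where "c0 = gM * M powr (2*\<gamma>/\<alpha>) / B"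
  have c00: "0 \<le> c0" unfolding c0_def using gM0 B0 by auto
  have Gs: "Gf \<alpha> D \<gamma> z w s = rpow (bfac \<alpha> D s z) \<gamma> * (s / B)" if "0 < s" "s \<le> M" for s
    unfolding Gf_def B_def \<rho>_def using qk_small[OF a that(1) zw] M\<rho> that unfolding \<rho>_def by auto
  have pw: "ennreal (Hf \<alpha> D \<gamma> t z w s) * indicator {0<..<t} s
      \<le> ennreal (indicator {0..M} s * (c0 * s powr p))" for s
  proof (cases "0 < s \<and> s < M")
    case True
    then have s: "0 < s" "s < M" by auto
    have gs: "rpow (bfac \<alpha> D s z) \<gamma> \<le> (M/s) powr (\<gamma>/\<alpha>) * gM"
      unfolding gM_def using a s g by (intro gA_scale) auto
    have "Hf \<alpha> D \<gamma> t z w s = rpow (bfac \<alpha> D s z) \<gamma> * (s / B) * (M/s) powr (\<gamma>/\<alpha>)"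
      unfolding Hf_def M_def[symmetric] using s Gs[of s] by auto
    also have "\<dots> \<le> ((M/s) powr (\<gamma>/\<alpha>) * gM) * (s / B) * (M/s) powr (\<gamma>/\<alpha>)"
      using gs s B0 by (intro mult_right_mono) auto
    also have "\<dots> = c0 * s powr p"
    proof -
      have e1: "(M/s) powr (\<gamma>/\<alpha>) * (M/s) powr (\<gamma>/\<alpha>) = M powr (2*\<gamma>/\<alpha>) / s powr (2*\<gamma>/\<alpha>)"
        using s M0 by (simp add: powr_add[symmetric] powr_divide)
      have e2: "s / s powr (2*\<gamma>/\<alpha>) = s powr p"
        unfolding p_def using s by (simp add: powr_diff)
      have "((M/s) powr (\<gamma>/\<alpha>) * gM) * (s / B) * (M/s) powr (\<gamma>/\<alpha>)
          = gM / B * ((M/s) powr (\<gamma>/\<alpha>) * (M/s) powr (\<gamma>/\<alpha>)) * s" by (simp add: algebra_simps)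
      also have "\<dots> = gM / B * M powr (2*\<gamma>/\<alpha>) * (s / s powr (2*\<gamma>/\<alpha>))" unfolding e1 by simp
      finally show ?thesis unfolding e2 c0_def by simp
    qed
    finally have "Hf \<alpha> D \<gamma> t z w s \<le> c0 * s powr p" .
    moreover have "s \<in> {0..M}" using s by auto
    ultimately show ?thesis by (auto simp: indicator_def intro: ennreal_leI)
  next
    case False
    then have "Hf \<alpha> D \<gamma> t z w s * indicator {0<..<t} s = 0"
      unfolding Hf_def M_def[symmetric] by (auto simp: indicator_def)
    then have "ennreal (Hf \<alpha> D \<gamma> t z w s) * indicator {0<..<t} s = 0"
      by (auto simp: indicator_def)
    then show ?thesis by (metis zero_le)
  qed
  have L1: "(\<integral>\<^sup>+ s\<in>{0<..<t}. ennreal (Hf \<alpha> D \<gamma> t z w s) \<partial>lborel)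
      \<le> ennreal (c0 * (M powr (p+1) / (p+1)))"
  proof -
    have "(\<integral>\<^sup>+ s\<in>{0<..<t}. ennreal (Hf \<alpha> D \<gamma> t z w s) \<partial>lborel)
        \<le> (\<integral>\<^sup>+ s. ennreal (indicator {0..M} s * (c0 * s powr p)) \<partial>lborel)"
      by (intro nn_integral_mono pw)
    also have "\<dots> = ennreal (c0 * (M powr (p+1) / (p+1)))"
      using c00 M0 p by (intro nn_integral_has_integral_lebesgue has_integral_mult_right has_integral_powr_from_0) auto
    finally show ?thesis .
  qed
  define L where "L = gM * (M/2) / B"
  have L0: "0 \<le> L" unfolding L_def using gM0 M0 B0 by auto
  have L2: "ennreal L * ennreal (M/2) \<le> (\<integral>\<^sup>+ s\<in>{0<..<t}. ennreal (Gf \<alpha> D \<gamma> z w s) \<partial>lborel)"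
  proof -
    have "ennreal L * ennreal (M/2) = (\<integral>\<^sup>+ s. ennreal L * indicator {M/2..<M} s \<partial>lborel)"
      using M0 by (subst nn_integral_cmult_indicator) auto
    also have "\<dots> \<le> (\<integral>\<^sup>+ s\<in>{0<..<t}. ennreal (Gf \<alpha> D \<gamma> z w s) \<partial>lborel)"
    proof (intro nn_integral_mono)
      fix s
      show "ennreal L * indicator {M/2..<M} s \<le> ennreal (Gf \<alpha> D \<gamma> z w s) * indicator {0<..<t} s"
      proof (cases "s \<in> {M/2..<M}")
        case True
        then have s: "0 < s" "s < M" "M/2 \<le> s" using M0 by auto
        have g1: "gM \<le> rpow (bfac \<alpha> D s z) \<gamma>" unfolding gM_def using a s g by (intro gA_anti) auto
        have g2: "(M/2)/B \<le> s/B" using s B0 by (intro divide_right_mono) auto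
        have "L = gM * ((M/2)/B)" unfolding L_def by simp
        also have "\<dots> \<le> rpow (bfac \<alpha> D s z) \<gamma> * (s / B)"
          using g1 g2 gM0 B0 s by (intro mult_mono) auto
        finally have "L \<le> rpow (bfac \<alpha> D s z) \<gamma> * (s / B)" .
        then have "L \<le> Gf \<alpha> D \<gamma> z w s" using Gs[of s] s by auto
        moreover have "s \<in> {0<..<t}" using s M\<rho> by auto
        ultimately show ?thesis using True by (auto simp: indicator_def intro: ennreal_leI)
      qed auto
    qed
    finally show ?thesis .
  qed
  have eq: "c0 * (M powr (p+1) / (p+1)) = (4 / (2 - 2*\<gamma>/\<alpha>)) * (L * (M/2))"
  proof -
    have "M powr (2*\<gamma>/\<alpha>) * M powr (p+1) = M powr 2" unfolding p(2) using M0 by (simp add: powr_add[symmetric])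
    also have "\<dots> = M * M" using M0 by (simp add: power2_eq_square[symmetric])
    finally have e: "M powr (2*\<gamma>/\<alpha>) * M powr (p+1) = M * M" .
    have "c0 * (M powr (p+1) / (p+1)) = gM / B * (M powr (2*\<gamma>/\<alpha>) * M powr (p+1)) / (p+1)"
      unfolding c0_def by (simp add: algebra_simps)
    also have "\<dots> = gM / B * (M * M) / (2 - 2*\<gamma>/\<alpha>)"
      using e unfolding p(2) by simp
    also have "\<dots> = (4 / (2 - 2*\<gamma>/\<alpha>)) * (L * (M/2))" unfolding L_def by (simp add: field_simps)
    finally show ?thesis .
  qed
  have Ch0: "0 \<le> 4 / (2 - 2*\<gamma>/\<alpha>)" using p by auto
  have "(\<integral>\<^sup>+ s\<in>{0<..<t}. ennreal (Hf \<alpha> D \<gamma> t z w s) \<partial>lborel) \<le> ennreal ((4 / (2 - 2*\<gamma>/\<alpha>)) * (L * (M/2)))"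
    using L1 unfolding eq .
  also have "\<dots> = ennreal (4 / (2 - 2*\<gamma>/\<alpha>)) * (ennreal L * ennreal (M/2))"
    using Ch0 L0 M0 by (simp only: ennreal_mult mult_nonneg_nonneg)
  also have "\<dots> \<le> ennreal (4 / (2 - 2*\<gamma>/\<alpha>)) * (\<integral>\<^sup>+ s\<in>{0<..<t}. ennreal (Gf \<alpha> D \<gamma> z w s) \<partial>lborel)"
    by (intro mult_left_mono L2) auto
  finally show ?thesis .
qed




lemma meas_Gf[measurable]: "(\<lambda>s. Gf \<alpha> D \<gamma> z w s) \<in> borel_measurable borel"
  unfolding Gf_def by (intro borel_measurable_times meas_rpow meas_bfac meas_qk)

lemma meas_Hf[measurable]: "(\<lambda>s. Hf \<alpha> D \<gamma> t z w s) \<in> borel_measurable borel"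
  unfolding Hf_def by measurable

lemma reflect: fixes F :: "real \<Rightarrow> ennreal" assumes [measurable]: "F \<in> borel_measurable borel"
  shows "(\<integral>\<^sup>+ s\<in>{0<..<t}. F (t - s) \<partial>lborel) = (\<integral>\<^sup>+ s\<in>{0<..<t}. F s \<partial>lborel)"
proof -
  have "(\<integral>\<^sup>+ s\<in>{0<..<t}. F s \<partial>lborel) = (\<integral>\<^sup>+ s. F (t + -1 * s) * indicator {0<..<t} (t + -1 * s) \<partial>lborel)"
    using nn_integral_real_affine[of "\<lambda>s. F s * indicator {0<..<t} s" "-1::real" t] by simp
  also have "\<dots> = (\<integral>\<^sup>+ s\<in>{0<..<t}. F (t - s) \<partial>lborel)"
    by (intro nn_integral_cong) (auto simp: indicator_def)
  finally show ?thesis by simp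
qed

lemma Ff_swap: "Ff \<alpha> D \<gamma> t x y z s = Ff \<alpha> D \<gamma> t y x z (t - s)"
  unfolding Ff_def psi_def using qk_sym[of \<alpha> "t - s" x z] qk_sym[of \<alpha> s z y] qk_sym[of \<alpha> t x y]
  by (simp add: algebra_simps)

lemma all_bound: fixes x y z :: "'a::euclidean_space"
  assumes a: "0 < \<alpha>" and g: "0 \<le> \<gamma>" "\<gamma> \<le> \<alpha>" and s: "0 < s" "s < t"
  shows "Ff \<alpha> D \<gamma> t x y z s \<le> Kp (real DIM('a)) \<alpha> \<gamma> *
     (2 * Gf \<alpha> D \<gamma> z y s + 2 * Gf \<alpha> D \<gamma> z x (t - s) + Hf \<alpha> D \<gamma> t z y s + Hf \<alpha> D \<gamma> t z x (t - s))"
proof -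
  let ?K = "Kp (real DIM('a)) \<alpha> \<gamma>"
  have K0: "0 \<le> ?K" unfolding Kp_def by auto
  have nn: "0 \<le> Gf \<alpha> D \<gamma> z y s" "0 \<le> Gf \<alpha> D \<gamma> z x (t - s)" "0 \<le> Hf \<alpha> D \<gamma> t z y s" "0 \<le> Hf \<alpha> D \<gamma> t z x (t - s)"
    using s by (auto intro: Gf_nonneg Hf_nonneg)
  show ?thesis
  proof (cases "s \<le> t/2")
    case True
    have "Ff \<alpha> D \<gamma> t x y z s \<le> ?K * (Gf \<alpha> D \<gamma> z y s + Hf \<alpha> D \<gamma> t z y s + Gf \<alpha> D \<gamma> z x (t - s))"
      using pointwise[OF a g s(1) True] .
    also have "\<dots> \<le> ?K * (2 * Gf \<alpha> D \<gamma> z y s + 2 * Gf \<alpha> D \<gamma> z x (t - s) + Hf \<alpha> D \<gamma> t z y s + Hf \<alpha> D \<gamma> t z x (t - s))"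
      using nn K0 by (intro mult_left_mono) auto
    finally show ?thesis .
  next
    case False
    have s': "0 < t - s" "t - s \<le> t/2" using s False by auto
    have "Ff \<alpha> D \<gamma> t x y z s = Ff \<alpha> D \<gamma> t y x z (t - s)" by (rule Ff_swap)
    also have "\<dots> \<le> ?K * (Gf \<alpha> D \<gamma> z x (t - s) + Hf \<alpha> D \<gamma> t z x (t - s) + Gf \<alpha> D \<gamma> z y (t - (t - s)))"
      using pointwise[OF a g s'] .
    also have "\<dots> \<le> ?K * (2 * Gf \<alpha> D \<gamma> z y s + 2 * Gf \<alpha> D \<gamma> z x (t - s) + Hf \<alpha> D \<gamma> t z y s + Hf \<alpha> D \<gamma> t z x (t - s))"
      using nn K0 by (intro mult_left_mono) auto
    finally show ?thesis .
  qed
qed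




lemma main_ineq: fixes x y z :: "'a::euclidean_space"
  assumes a: "0 < \<alpha>" and g: "0 \<le> \<gamma>" "\<gamma> < \<alpha>" and t: "0 < t"
  shows "(\<integral>\<^sup>+ s\<in>{0<..<t}. ennreal (Ff \<alpha> D \<gamma> t x y z s) \<partial>lborel)
    \<le> ennreal (Kp (real DIM('a)) \<alpha> \<gamma> * (2 + 4 / (2 - 2*\<gamma>/\<alpha>))) *
       (\<integral>\<^sup>+ s\<in>{0<..<t}. ennreal (rpow (bfac \<alpha> D s z) \<gamma> * (qk \<alpha> s x z + qk \<alpha> s z y)) \<partial>lborel)"
proof -
  define K where "K = Kp (real DIM('a)) \<alpha> \<gamma>"
  define Ch where "Ch = 4 / (2 - 2*\<gamma>/\<alpha>)"
  have g': "\<gamma> \<le> \<alpha>" using g by auto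
  have K0: "0 \<le> K" unfolding K_def Kp_def by auto
  have Ch0: "0 \<le> Ch" unfolding Ch_def using a g by (auto simp: field_simps)
  define A where "A = {0<..<t::real}"
  define R1 where "R1 = (\<integral>\<^sup>+ s\<in>A. ennreal (Gf \<alpha> D \<gamma> z y s) \<partial>lborel)"
  define R2 where "R2 = (\<integral>\<^sup>+ s\<in>A. ennreal (Gf \<alpha> D \<gamma> z x s) \<partial>lborel)"
  define fa where "fa = (\<lambda>s. ennreal (Gf \<alpha> D \<gamma> z y s) * indicator A s)"
  define fb where "fb = (\<lambda>s. ennreal (Gf \<alpha> D \<gamma> z x (t - s)) * indicator A s)"
  define fc where "fc = (\<lambda>s. ennreal (Hf \<alpha> D \<gamma> t z y s) * indicator A s)"
  define fd where "fd = (\<lambda>s. ennreal (Hf \<alpha> D \<gamma> t z x (t - s)) * indicator A s)"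
  have Ameas[measurable]: "A \<in> sets borel" unfolding A_def by simp
  have mfa[measurable]: "fa \<in> borel_measurable borel" unfolding fa_def by measurable
  have mfb[measurable]: "fb \<in> borel_measurable borel" unfolding fb_def by measurable
  have mfc[measurable]: "fc \<in> borel_measurable borel" unfolding fc_def by measurable
  have mfd[measurable]: "fd \<in> borel_measurable borel" unfolding fd_def by measurable
  have RHS: "(\<integral>\<^sup>+ s\<in>A. ennreal (rpow (bfac \<alpha> D s z) \<gamma> * (qk \<alpha> s x z + qk \<alpha> s z y)) \<partial>lborel) = R2 + R1"
  proof -
    have "(\<integral>\<^sup>+ s\<in>A. ennreal (rpow (bfac \<alpha> D s z) \<gamma> * (qk \<alpha> s x z + qk \<alpha> s z y)) \<partial>lborel)
        = (\<integral>\<^sup>+ s\<in>A. (ennreal (Gf \<alpha> D \<gamma> z x s) + ennreal (Gf \<alpha> D \<gamma> z y s)) \<partial>lborel)"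
    proof (intro nn_integral_cong)
      fix s
      show "ennreal (rpow (bfac \<alpha> D s z) \<gamma> * (qk \<alpha> s x z + qk \<alpha> s z y)) * indicator A s
          = (ennreal (Gf \<alpha> D \<gamma> z x s) + ennreal (Gf \<alpha> D \<gamma> z y s)) * indicator A s"
      proof (cases "s \<in> A")
        case True
        then have s: "0 < s" unfolding A_def by auto
        have "rpow (bfac \<alpha> D s z) \<gamma> * (qk \<alpha> s x z + qk \<alpha> s z y) = Gf \<alpha> D \<gamma> z x s + Gf \<alpha> D \<gamma> z y s"
          unfolding Gf_def by (simp add: qk_sym[of \<alpha> s x z] algebra_simps)
        moreover have "0 \<le> Gf \<alpha> D \<gamma> z x s" "0 \<le> Gf \<alpha> D \<gamma> z y s" using s by (auto intro: Gf_nonneg)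
        ultimately show ?thesis using True by (simp add: ennreal_plus)
      qed simp
    qed
    also have "\<dots> = R2 + R1" unfolding R1_def R2_def
      by (intro nn_set_integral_add) auto
    finally show ?thesis .
  qed
  have step1: "(\<integral>\<^sup>+ s\<in>A. ennreal (Ff \<alpha> D \<gamma> t x y z s) \<partial>lborel)
      \<le> (\<integral>\<^sup>+ s. ennreal K * (2 * fa s + 2 * fb s + fc s + fd s) \<partial>lborel)"
  proof (intro nn_integral_mono)
    fix s
    show "ennreal (Ff \<alpha> D \<gamma> t x y z s) * indicator A s \<le> ennreal K * (2 * fa s + 2 * fb s + fc s + fd s)"
    proof (cases "s \<in> A")
      case True
      then have s: "0 < s" "s < t" unfolding A_def by auto
      have nn: "0 \<le> Gf \<alpha> D \<gamma> z y s" "0 \<le> Gf \<alpha> D \<gamma> z x (t - s)" "0 \<le> Hf \<alpha> D \<gamma> t z y s" "0 \<le> Hf \<alpha> D \<gamma> t z x (t - s)"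
        using s by (auto intro: Gf_nonneg Hf_nonneg)
      have "ennreal (Ff \<alpha> D \<gamma> t x y z s) \<le> ennreal (K * (2 * Gf \<alpha> D \<gamma> z y s + 2 * Gf \<alpha> D \<gamma> z x (t - s) + Hf \<alpha> D \<gamma> t z y s + Hf \<alpha> D \<gamma> t z x (t - s)))"
        unfolding K_def using all_bound[OF a g(1) g' s, of D x y z] by (intro ennreal_leI)
      also have "\<dots> = ennreal K * (2 * fa s + 2 * fb s + fc s + fd s)"
        using True nn K0 unfolding fa_def fb_def fc_def fd_def
        by (simp add: ennreal_mult ennreal_plus)
      finally show ?thesis using True by simp
    qed (simp add: fa_def fb_def fc_def fd_def)
  qed
  have step2: "(\<integral>\<^sup>+ s. ennreal K * (2 * fa s + 2 * fb s + fc s + fd s) \<partial>lborel)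
      = ennreal K * (2 * integral\<^sup>N lborel fa + 2 * integral\<^sup>N lborel fb + integral\<^sup>N lborel fc + integral\<^sup>N lborel fd)"
  proof -
    have "(\<integral>\<^sup>+ s. ennreal K * (2 * fa s + 2 * fb s + fc s + fd s) \<partial>lborel)
        = ennreal K * (\<integral>\<^sup>+ s. (2 * fa s + 2 * fb s + fc s + fd s) \<partial>lborel)"
      by (rule nn_integral_cmult) measurable
    also have "(\<integral>\<^sup>+ s. (2 * fa s + 2 * fb s + fc s + fd s) \<partial>lborel)
        = (\<integral>\<^sup>+ s. (2 * fa s + 2 * fb s + fc s) \<partial>lborel) + integral\<^sup>N lborel fd"
      by (rule nn_integral_add) measurable
    also have "(\<integral>\<^sup>+ s. (2 * fa s + 2 * fb s + fc s) \<partial>lborel)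
        = (\<integral>\<^sup>+ s. (2 * fa s + 2 * fb s) \<partial>lborel) + integral\<^sup>N lborel fc"
      by (rule nn_integral_add) measurable
    also have "(\<integral>\<^sup>+ s. (2 * fa s + 2 * fb s) \<partial>lborel)
        = (\<integral>\<^sup>+ s. 2 * fa s \<partial>lborel) + (\<integral>\<^sup>+ s. 2 * fb s \<partial>lborel)"
      by (rule nn_integral_add) measurable
    also have "(\<integral>\<^sup>+ s. 2 * fa s \<partial>lborel) = 2 * integral\<^sup>N lborel fa"
      by (rule nn_integral_cmult) measurable
    also have "(\<integral>\<^sup>+ s. 2 * fb s \<partial>lborel) = 2 * integral\<^sup>N lborel fb"
      by (rule nn_integral_cmult) measurable
    finally show ?thesis .
  qed
  have ia: "integral\<^sup>N lborel fa = R1" unfolding fa_def R1_def ..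
  have ib: "integral\<^sup>N lborel fb = R2" unfolding fb_def R2_def A_def
    by (rule reflect) measurable
  have ic: "integral\<^sup>N lborel fc \<le> ennreal Ch * R1" unfolding fc_def R1_def A_def Ch_def
    by (rule hardy[OF a g t])
  have id: "integral\<^sup>N lborel fd \<le> ennreal Ch * R2"
  proof -
    have "integral\<^sup>N lborel fd = (\<integral>\<^sup>+ s\<in>A. ennreal (Hf \<alpha> D \<gamma> t z x s) \<partial>lborel)"
      unfolding fd_def A_def by (rule reflect) measurable
    also have "\<dots> \<le> ennreal Ch * R2" unfolding R2_def A_def Ch_def
      by (rule hardy[OF a g t])
    finally show ?thesis .
  qed
  have "(\<integral>\<^sup>+ s\<in>A. ennreal (Ff \<alpha> D \<gamma> t x y z s) \<partial>lborel)
      \<le> ennreal K * (2 * R1 + 2 * R2 + ennreal Ch * R1 + ennreal Ch * R2)"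
    using step1 unfolding step2 ia ib
    by (rule order_trans) (intro mult_left_mono add_mono ic id order_refl; simp)
  also have "\<dots> = ennreal (K * (2 + Ch)) * (R2 + R1)"
    using K0 Ch0 by (simp add: ennreal_mult ennreal_plus algebra_simps)
  finally show ?thesis unfolding RHS[symmetric] K_def Ch_def A_def .
qed


theorem lemma2p3:
  fixes \<alpha> \<gamma> :: real
  assumes "0 < \<alpha>" "\<alpha> < 2" "0 \<le> \<gamma>" "\<gamma> < \<alpha>"
  shows "\<exists>C>0. \<forall>(D :: 'a::euclidean_space set) t x y z.
           D \<in> sets borel \<longrightarrow> 0 < t \<longrightarrow> x \<in> D \<longrightarrow> y \<in> D \<longrightarrow> z \<in> D \<longrightarrow>
           (\<integral>\<^sup>+ s \<in> {0<..<t}. ennreal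
              (psi \<alpha> D \<gamma> (t - s) x z * qk \<alpha> (t - s) x z * psi \<alpha> D \<gamma> s z y * qk \<alpha> s z y
               / (psi \<alpha> D \<gamma> t x y * qk \<alpha> t x y)) \<partial>lborel)
           \<le> ennreal C * (\<integral>\<^sup>+ s \<in> {0<..<t}. ennreal
              (rpow (bfac \<alpha> D s z) \<gamma> * (qk \<alpha> s x z + qk \<alpha> s z y)) \<partial>lborel)"
proof -
  define C where "C = Kp (real DIM('a)) \<alpha> \<gamma> * (2 + 4 / (2 - 2*\<gamma>/\<alpha>))"
  have C0: "0 < C"
  proof -
    have "0 < Kp (real DIM('a)) \<alpha> \<gamma>" unfolding Kp_def by (intro add_pos_pos mult_pos_pos) auto
    moreover have "0 < 2 - 2*\<gamma>/\<alpha>" using assms by (auto simp: field_simps)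
    then have "0 < 2 + 4 / (2 - 2*\<gamma>/\<alpha>)" by (intro add_pos_nonneg) auto
    ultimately show ?thesis unfolding C_def by simp
  qed
  show ?thesis
  proof (intro exI[of _ C] conjI allI impI)
    show "0 < C" by (rule C0)
  next
    fix D :: "'a set" and t :: real and x y z :: 'a
    assume "0 < t"
    show "(\<integral>\<^sup>+ s \<in> {0<..<t}. ennreal
              (psi \<alpha> D \<gamma> (t - s) x z * qk \<alpha> (t - s) x z * psi \<alpha> D \<gamma> s z y * qk \<alpha> s z y
               / (psi \<alpha> D \<gamma> t x y * qk \<alpha> t x y)) \<partial>lborel)
           \<le> ennreal C * (\<integral>\<^sup>+ s \<in> {0<..<t}. ennreal
              (rpow (bfac \<alpha> D s z) \<gamma> * (qk \<alpha> s x z + qk \<alpha> s z y)) \<partial>lborel)"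
      unfolding C_def by (rule main_ineq[OF assms(1,3,4) \<open>0 < t\<close>, unfolded Ff_def])
  qed
qed

end
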